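(* Let $\{E^{(f)}\}_{f\in\mathcal F}$ be a finite family of linear operators on $\mathbb{C}^2$ (describing Eve's action on Bob's qubit), and define the (unnormalized) two-qubit state $$\rho=\sum_{k=0}^{3}\sum_{f\in\mathcal F}\big(I_A\otimes F R^{-k}E^{(f)}R^{k}\big)|\Psi\rangle\langle\Psi|\big(I_A\otimes F R^{-k}E^{(f)}R^{k}\big)^\dagger ,$$ where $|\Psi\rangle=\frac{1}{\sqrt2}\big(|0_z\rangle_A|\varphi_0\rangle_B+|1_z\rangle_A|\varphi_1\rangle_B\big)$. Assume $\operatorname{Tr}\rho>0$ and set $p_X=\langle\Psi^+|\rho|\Psi^+\rangle/\operatorname{Tr}\rho$, $p_Z=\langle\Phi^-|\rho|\Phi^-\rangle/\operatorname{Tr}\rho$, $p_Y=\langle\Psi^-|\rho|\Psi^-\rangle/\operatorname{Tr}\rho$. Let $e_b=p_X+p_Y$ (the bit error rate) and $a=p_Y$. Then $$p_X=e_b-a,\qquad p_Z=\tfrac32 e_b-a,\qquad p_Y=a,$$ and $e_b/2\le a\le e_b$.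
   Context: Qubits use two orthonormal bases related by $|0_x\rangle=(|0_z\rangle+|1_z\rangle)/\sqrt2$, $|1_x\rangle=(|0_z\rangle-|1_z\rangle)/\sqrt2$. Let $\alpha=\sin(\pi/8)$, $\beta=\cos(\pi/8)$, $|\varphi_0\rangle=\beta|0_x\rangle+\alpha|1_x\rangle$, $R=\cos(\pi/4)I+\sin(\pi/4)\big(|1_x\rangle\langle 0_x|-|0_x\rangle\langle 1_x|\big)$ and $|\varphi_m\rangle=R^{-m}|\varphi_0\rangle$ for $m=0,\dots,3$. The filtering operator is $F=\sin(\pi/8)|0_x\rangle\langle0_x|+\cos(\pi/8)|1_x\rangle\langle1_x|$. The Bell states are $|\Phi^\pm\rangle=(|0_z0_z\rangle\pm|1_z1_z\rangle)/\sqrt2$ and $|\Psi^\pm\rangle=(|0_z1_z\rangle\pm|1_z0_z\rangle)/\sqrt2$; $p_X,p_Y,p_Z$ are the probabilities of bit-flip, bit-and-phase-flip, and phase-flip errors relative to $|\Phi^+\rangle$. *)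

theory Defs
  imports "HOL-Analysis.Analysis"
begin

type_synonym qubit = "complex^2"
type_synonym op1 = "complex^2^2"
type_synonym qubit2 = "complex^(2 \<times> 2)"
type_synonym op2 = "complex^(2 \<times> 2)^(2 \<times> 2)"

(* computational (z) basis: index 1 ~ |0_z>, index 2 ~ |1_z> *)
definition ket0z :: qubit where "ket0z = (\<chi> i. if i = 1 then 1 else 0)"
definition ket1z :: qubit where "ket1z = (\<chi> i. if i = 1 then 0 else 1)"

definition ket0x :: qubit where "ket0x = (1 / sqrt 2) *\<^sub>R (ket0z + ket1z)"
definition ket1x :: qubit where "ket1x = (1 / sqrt 2) *\<^sub>R (ket0z - ket1z)"

definition ketbra :: "complex^'n \<Rightarrow> complex^'m \<Rightarrow> complex^'m^'n"
  where "ketbra u v = (\<chi> i j. u$i * cnj (v$j))"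

definition braket :: "complex^'n \<Rightarrow> complex^'n \<Rightarrow> complex"
  where "braket u v = (\<Sum>i\<in>UNIV. cnj (u$i) * v$i)"

definition adjoint_mat :: "complex^'n^'m \<Rightarrow> complex^'m^'n"
  where "adjoint_mat A = (\<chi> i j. cnj (A$j$i))"

definition tensor :: "complex^'a \<Rightarrow> complex^'b \<Rightarrow> complex^('a \<times> 'b)"
  where "tensor u v = (\<chi> p. u$(fst p) * v$(snd p))"

definition kron :: "complex^'a^'a \<Rightarrow> complex^'b^'b \<Rightarrow> complex^('a \<times> 'b)^('a \<times> 'b)"
  where "kron A B = (\<chi> p q. A$(fst p)$(fst q) * B$(snd p)$(snd q))"

fun mpow :: "complex^'n^'n \<Rightarrow> nat \<Rightarrow> complex^'n^'n" where
  "mpow A 0 = mat 1"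
| "mpow A (Suc n) = A ** mpow A n"

definition alpha :: real where "alpha = sin (pi / 8)"
definition beta :: real where "beta = cos (pi / 8)"

definition phi0 :: qubit where "phi0 = beta *\<^sub>R ket0x + alpha *\<^sub>R ket1x"

definition Rot :: op1 where
  "Rot = cos (pi / 4) *\<^sub>R mat 1 + sin (pi / 4) *\<^sub>R (ketbra ket1x ket0x - ketbra ket0x ket1x)"

definition Rinvpow :: "nat \<Rightarrow> op1" where "Rinvpow m = mpow (matrix_inv Rot) m"

definition phi :: "nat \<Rightarrow> qubit" where "phi m = Rinvpow m *v phi0"

definition Filt :: op1 where
  "Filt = sin (pi / 8) *\<^sub>R ketbra ket0x ket0x + cos (pi / 8) *\<^sub>R ketbra ket1x ket1x"

definition PhiP :: qubit2 where "PhiP = (1 / sqrt 2) *\<^sub>R (tensor ket0z ket0z + tensor ket1z ket1z)"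
definition PhiM :: qubit2 where "PhiM = (1 / sqrt 2) *\<^sub>R (tensor ket0z ket0z - tensor ket1z ket1z)"
definition PsiP :: qubit2 where "PsiP = (1 / sqrt 2) *\<^sub>R (tensor ket0z ket1z + tensor ket1z ket0z)"
definition PsiM :: qubit2 where "PsiM = (1 / sqrt 2) *\<^sub>R (tensor ket0z ket1z - tensor ket1z ket0z)"

definition PsiAB :: qubit2 where
  "PsiAB = (1 / sqrt 2) *\<^sub>R (tensor ket0z (phi 0) + tensor ket1z (phi 1))"

definition rho :: "'f set \<Rightarrow> ('f \<Rightarrow> op1) \<Rightarrow> op2" where
  "rho Fam E = (\<Sum>k\<in>{0..(3::nat)}. \<Sum>f\<in>Fam.
      (let M = kron (mat 1) (Filt ** Rinvpow k ** E f ** mpow Rot k)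
       in M ** ketbra PsiAB PsiAB ** adjoint_mat M))"

definition prob :: "op2 \<Rightarrow> qubit2 \<Rightarrow> real" where
  "prob r psi = Re (braket psi (r *v psi)) / Re (trace r)"

end

theory Submission
  imports Defs
begin

definition vec2 :: "complex \<Rightarrow> complex \<Rightarrow> complex^2" where
  "vec2 x y = (\<chi> i. if i = 1 then x else y)"
definition mat2 :: "complex \<Rightarrow> complex \<Rightarrow> complex \<Rightarrow> complex \<Rightarrow> complex^2^2" where
  "mat2 p q u w = (\<chi> i. if i = 1 then vec2 p q else vec2 u w)"

lemma two_ne_one: "(2::2) \<noteq> 1" by simp

lemma vec2_nth[simp]: "vec2 x y $ 1 = x" "vec2 x y $ 2 = y"
  by (simp_all add: vec2_def)
lemma mat2_nth[simp]: "mat2 p q u w $ 1 = vec2 p q" "mat2 p q u w $ 2 = vec2 u w"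
  by (simp_all add: mat2_def)
lemma vec2_eta: "(v::complex^2) = vec2 (v$1) (v$2)"
  by (simp add: vec_eq_iff forall_2)
lemma mat2_eta: "(M::complex^2^2) = mat2 (M$1$1) (M$1$2) (M$2$1) (M$2$2)"
  by (simp add: vec_eq_iff forall_2)
lemma vec2_eq_iff[simp]: "vec2 x y = vec2 x' y' \<longleftrightarrow> x = x' \<and> y = y'"
  by (metis vec2_nth)
lemma mat2_eq_iff[simp]: "mat2 p q u w = mat2 p' q' u' w' \<longleftrightarrow> p = p' \<and> q = q' \<and> u = u' \<and> w = w'"
  by (metis mat2_nth vec2_eq_iff)
lemma vec2_add[simp]: "vec2 x y + vec2 x' y' = vec2 (x+x') (y+y')"
  by (simp add: vec_eq_iff forall_2)
lemma vec2_diff[simp]: "vec2 x y - vec2 x' y' = vec2 (x-x') (y-y')"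
  by (simp add: vec_eq_iff forall_2)
lemma vec2_scaleR[simp]: "c *\<^sub>R vec2 x y = vec2 (of_real c * x) (of_real c * y)"
  by (simp add: vec_eq_iff forall_2 scaleR_conv_of_real[where 'a=complex])
lemma mat2_add[simp]: "mat2 p q u w + mat2 p' q' u' w' = mat2 (p+p') (q+q') (u+u') (w+w')"
  by (simp add: vec_eq_iff forall_2)
lemma mat2_diff[simp]: "mat2 p q u w - mat2 p' q' u' w' = mat2 (p-p') (q-q') (u-u') (w-w')"
  by (simp add: vec_eq_iff forall_2)
lemma mat2_scaleR[simp]: "c *\<^sub>R mat2 p q u w = mat2 (of_real c * p) (of_real c * q) (of_real c * u) (of_real c * w)"
  by (simp add: vec_eq_iff forall_2 scaleR_conv_of_real[where 'a=complex])
lemma mat2_mult[simp]: "mat2 p q u w ** mat2 p' q' u' w' =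
   mat2 (p*p'+q*u') (p*q'+q*w') (u*p'+w*u') (u*q'+w*w')"
  by (simp add: vec_eq_iff forall_2 matrix_matrix_mult_def sum_2)
lemma mat2_mv[simp]: "mat2 p q u w *v vec2 x y = vec2 (p*x+q*y) (u*x+w*y)"
  by (simp add: vec_eq_iff forall_2 matrix_vector_mult_def sum_2)
lemma mat1_2: "(mat 1 :: complex^2^2) = mat2 1 0 0 1"
  by (simp add: vec_eq_iff forall_2 mat_def)
lemma ketbra_vec2[simp]: "ketbra (vec2 x y) (vec2 x' y') = mat2 (x*cnj x') (x*cnj y') (y*cnj x') (y*cnj y')"
  by (simp add: vec_eq_iff forall_2 ketbra_def)
lemma ket0z_2: "ket0z = vec2 1 0" by (simp add: ket0z_def vec2_def)
lemma ket1z_2: "ket1z = vec2 0 1" by (simp add: ket1z_def vec2_def vec_eq_iff)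

definition sS :: complex where "sS = of_real (sqrt 2 / 2)"
definition sA :: complex where "sA = of_real alpha"
definition sB :: complex where "sB = of_real beta"

lemma sS_sq: "sS * sS = 1/2"
  unfolding sS_def by (simp flip: of_real_mult)
lemma cnj_sS[simp]: "cnj sS = sS" by (simp add: sS_def)
lemma cnj_sA[simp]: "cnj sA = sA" by (simp add: sA_def)
lemma cnj_sB[simp]: "cnj sB = sB" by (simp add: sB_def)

lemma sS_nz: "sS \<noteq> 0" by (simp add: sS_def)
lemma sqrt2_c: "complex_of_real (sqrt 2) = 2 * sS" by (simp add: sS_def)
lemma inv_sqrt2: "1 / (2 * sS) = sS" "inverse (2 * sS) = sS"
proof -
  show "1 / (2 * sS) = sS" using sS_nz sS_sq by (simp add: field_simps)
  then show "inverse (2 * sS) = sS" by (simp only: inverse_eq_divide)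
qed

lemma ket0x_2: "ket0x = vec2 sS sS"
  by (simp add: ket0x_def ket0z_2 ket1z_2 inv_sqrt2 sqrt2_c)
lemma ket1x_2: "ket1x = vec2 sS (- sS)"
  by (simp add: ket1x_def ket0z_2 ket1z_2 inv_sqrt2 sqrt2_c)

lemma sS_cube: "sS * (sS * sS) = sS / 2" by (simp add: sS_sq)

lemma Rot_2: "Rot = mat2 sS sS (-sS) sS"
  unfolding Rot_def cos_45 sin_45 ket0x_2 ket1x_2 mat1_2 ketbra_vec2 mat2_diff mat2_scaleR mat2_add
  apply (simp only: sS_def[symmetric])
  apply (simp add: sS_sq)
  done

lemma UNIV_22: "(UNIV :: (2 \<times> 2) set) = {(1,1),(1,2),(2,1),(2,2)}"
  by (auto simp: UNIV_2 simp flip: UNIV_Times_UNIV)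
lemma sum_22: "sum f (UNIV :: (2 \<times> 2) set) = f (1,1) + f (1,2) + f (2,1) + f (2,2)"
  unfolding UNIV_22 by (simp add: add.assoc)
lemma forall_22: "(\<forall>p::2\<times>2. P p) \<longleftrightarrow> P (1,1) \<and> P (1,2) \<and> P (2,1) \<and> P (2,2)"
  by (metis UNIV_22 UNIV_I insertE empty_iff)

lemma mat1_nth: "(mat 1 :: complex^2^2) $ 1 $ 1 = 1" "(mat 1 :: complex^2^2) $ 1 $ 2 = 0"
   "(mat 1 :: complex^2^2) $ 2 $ 1 = 0" "(mat 1 :: complex^2^2) $ 2 $ 2 = 1"
  by (simp_all add: mat_def)

lemma psiAB_nth: "PsiAB $ (1,j) = sS * (phi 0 $ j)" "PsiAB $ (2,j) = sS * (phi 1 $ j)"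
  by (simp_all add: PsiAB_def tensor_def ket0z_def ket1z_def inv_sqrt2 sqrt2_c scaleR_conv_of_real[where 'a=complex])

lemma kron_mv: "(kron (mat 1) M *v PsiAB) $ (1,j) = sS * ((M *v phi 0) $ j)"
   "(kron (mat 1) M *v PsiAB) $ (2,j) = sS * ((M *v phi 1) $ j)"
  by (simp_all add: matrix_vector_mult_def kron_def sum_22 mat1_nth psiAB_nth sum_2 algebra_simps)

lemma bell_nth:
  "PsiP $ (1,1) = 0" "PsiP $ (1,2) = sS" "PsiP $ (2,1) = sS" "PsiP $ (2,2) = 0"
  "PsiM $ (1,1) = 0" "PsiM $ (1,2) = sS" "PsiM $ (2,1) = -sS" "PsiM $ (2,2) = 0"
  "PhiM $ (1,1) = sS" "PhiM $ (1,2) = 0" "PhiM $ (2,1) = 0" "PhiM $ (2,2) = -sS"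
  by (simp_all add: PsiP_def PsiM_def PhiM_def tensor_def ket0z_def ket1z_def inv_sqrt2 sqrt2_c scaleR_conv_of_real[where 'a=complex])

lemma sS_sq2: "sS * (sS * x) = x / 2" by (simp add: mult.assoc[symmetric] sS_sq)

lemma ccX: "braket PsiP (kron (mat 1) M *v PsiAB) = ((M *v phi 0)$2 + (M *v phi 1)$1) / 2"
  by (simp add: braket_def sum_22 bell_nth kron_mv algebra_simps sS_sq2)
lemma ccY: "braket PsiM (kron (mat 1) M *v PsiAB) = ((M *v phi 0)$2 - (M *v phi 1)$1) / 2"
  by (simp add: braket_def sum_22 bell_nth kron_mv algebra_simps sS_sq2)
lemma ccZ: "braket PhiM (kron (mat 1) M *v PsiAB) = ((M *v phi 0)$1 - (M *v phi 1)$2) / 2"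
  by (simp add: braket_def sum_22 bell_nth kron_mv algebra_simps sS_sq2)

lemma matrix_inv_eq:
  fixes A X :: "complex^'n^'n"
  assumes "A ** X = mat 1" "X ** A = mat 1"
  shows "matrix_inv A = X"
proof -
  have ex: "\<exists>Y. A ** Y = mat 1 \<and> Y ** A = mat 1" using assms by blast
  define Y where "Y = matrix_inv A"
  have Y: "A ** Y = mat 1 \<and> Y ** A = mat 1"
    unfolding Y_def matrix_inv_def by (rule someI_ex[OF ex])
  have "Y = Y ** (A ** X)" using assms by (simp add: matrix_mul_rid)
  also have "\<dots> = (Y ** A) ** X" by (simp add: matrix_mul_assoc)
  also have "\<dots> = X" using Y by (simp add: matrix_mul_lid)
  finally show ?thesis unfolding Y_def .
qed

lemma Rinv_2: "matrix_inv Rot = mat2 sS (-sS) sS sS"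
  by (rule matrix_inv_eq) (simp_all add: Rot_2 mat1_2 sS_sq)

lemma real_facts:
  shows "alpha > 0" "beta > 0" "alpha^2 + beta^2 = 1" "beta^2 - alpha^2 = sqrt 2 / 2"
    "2 * alpha * beta = sqrt 2 / 2"
proof -
  show "alpha > 0" unfolding alpha_def by (rule sin_gt_zero) (auto simp: pi_gt_zero)
  show "beta > 0" unfolding beta_def by (rule cos_gt_zero) (insert pi_gt_zero, auto)
  show "alpha^2 + beta^2 = 1" unfolding alpha_def beta_def by simp
  have "cos (2 * (pi/8)) = sqrt 2 / 2" using cos_45 by simp
  then show "beta^2 - alpha^2 = sqrt 2 / 2" unfolding alpha_def beta_def cos_double .
  have "sin (2 * (pi/8)) = sqrt 2 / 2" using sin_45 by simp
  then show "2 * alpha * beta = sqrt 2 / 2" unfolding alpha_def beta_def sin_double .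
qed

lemma beta_eq: "beta = alpha + sqrt 2 * alpha"
proof -
  note f = real_facts
  have s2: "sqrt 2 ^ 2 = 2" by simp
  have "(beta - alpha)^2 = (sqrt 2 * alpha)^2"
    using f(3,4,5) s2 by (simp add: power2_eq_square algebra_simps power_mult_distrib)
  moreover have "beta - alpha \<ge> 0"
  proof -
    have "(beta - alpha) * (beta + alpha) = beta^2 - alpha^2" by (simp add: algebra_simps power2_eq_square)
    also have "\<dots> > 0" unfolding f(4) by simp
    finally have "(beta - alpha) * (beta + alpha) > 0" .
    then show ?thesis using f(1,2) by (simp add: zero_less_mult_iff)
  qed
  moreover have "sqrt 2 * alpha \<ge> 0" using f(1) by simp
  ultimately have "beta - alpha = sqrt 2 * alpha" by (rule power2_eq_imp_eq)
  then show ?thesis by simp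
qed

lemma alpha_sq: "alpha * alpha = (1 - sqrt 2 / 2) / 2"
  using real_facts(3,4) by (simp add: power2_eq_square algebra_simps)

lemma sB_eq: "sB = sA + 2 * sS * sA"
  unfolding sB_def sA_def sS_def by (simp add: beta_eq)
lemma sA_sq: "sA * sA = (1 - sS) / 2"
  unfolding sA_def sS_def by (simp flip: of_real_mult add: alpha_sq)

lemma Filt_2: "Filt = mat2 ((sA+sB)/2) ((sA-sB)/2) ((sA-sB)/2) ((sA+sB)/2)"
  unfolding Filt_def ket0x_2 ket1x_2 ketbra_vec2 mat2_scaleR mat2_add
  apply (simp only: alpha_def[symmetric] beta_def[symmetric] sA_def[symmetric] sB_def[symmetric])
  apply (simp add: sS_sq sS_sq2 algebra_simps)
  done

lemma phi0_2: "phi0 = vec2 (sS * (sB + sA)) (sS * (sB - sA))"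
  unfolding phi0_def ket0x_2 ket1x_2
  apply (simp only: vec2_scaleR vec2_add sA_def[symmetric] sB_def[symmetric])
  apply (simp add: algebra_simps)
  done

lemma phi_0: "phi 0 = phi0" by (simp add: phi_def Rinvpow_def mat1_2 phi0_2)
lemma phi_1: "phi 1 = mat2 sS (-sS) sS sS *v phi0" by (simp add: phi_def Rinvpow_def mat1_2 Rinv_2)

definition sH :: complex where "sH = sA + sS * sA"
definition sM :: complex where "sM = sS * sA"

lemma prods: "sH * sA = 1/4" "sM * sA = sS/2 - 1/4" "sH * sB = 1/4 + sS/2" "sM * sB = 1/4"
  unfolding sH_def sM_def using sB_eq sA_sq sS_sq by algebra+

lemma Filt_3: "Filt = mat2 sH (-sM) (-sM) sH"
  unfolding Filt_2 sH_def sM_def sB_eq by (simp add: algebra_simps)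

lemma phi0_3: "phi0 = vec2 sB sA"
  unfolding phi0_2 using sB_eq sS_sq by simp algebra

lemma phi1_3: "phi 1 = vec2 sA sB"
  unfolding phi_1 phi0_3 using sB_eq sS_sq by simp algebra

lemma phi0_3': "phi 0 = vec2 sB sA" using phi_0 phi0_3 by simp

lemma mpow_num: "mpow A (numeral n) = A ** mpow A (pred_numeral n)"
  by (simp add: numeral_eq_Suc)

lemma Rinv_2': "matrix_inv (mat2 sS sS (-sS) sS) = mat2 sS (-sS) sS sS"
  using Rinv_2 Rot_2 by simp

lemma Rp: "mpow Rot 0 = mat2 1 0 0 1" "mpow Rot 1 = mat2 sS sS (-sS) sS"
  "mpow Rot 2 = mat2 0 1 (-1) 0" "mpow Rot 3 = mat2 (-sS) sS (-sS) (-sS)"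
  by (simp_all add: Rot_2 mpow_num mat1_2 sS_sq)

lemma Rip: "Rinvpow 0 = mat2 1 0 0 1" "Rinvpow 1 = mat2 sS (-sS) sS sS"
  "Rinvpow 2 = mat2 0 (-1) 1 0" "Rinvpow 3 = mat2 (-sS) (-sS) sS (-sS)"
  by (simp_all add: Rinvpow_def Rinv_2 mpow_num mat1_2 sS_sq)

lemma FR: "Filt ** Rinvpow 0 = mat2 sH (-sM) (-sM) sH"
  "Filt ** Rinvpow 1 = mat2 sM (-sH) sM sH"
  "Filt ** Rinvpow 2 = mat2 (-sM) (-sH) sH sM"
  "Filt ** Rinvpow 3 = mat2 (-sH) (-sM) sH (-sM)"
  unfolding Filt_3 Rip sH_def sM_def using sS_sq by simp_all algebra+

lemma Rphi0: "mpow Rot 0 *v phi 0 = vec2 sB sA" "mpow Rot 1 *v phi 0 = vec2 sB (-sA)"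
  "mpow Rot 2 *v phi 0 = vec2 sA (-sB)" "mpow Rot 3 *v phi 0 = vec2 (-sA) (-sB)"
  unfolding Rp phi0_3' using sS_sq sB_eq by simp_all algebra+

lemma Rphi1: "mpow Rot 0 *v phi 1 = vec2 sA sB" "mpow Rot 1 *v phi 1 = vec2 sB sA"
  "mpow Rot 2 *v phi 1 = vec2 sB (-sA)" "mpow Rot 3 *v phi 1 = vec2 sA (-sB)"
  unfolding Rp phi1_3 using sS_sq sB_eq by simp_all algebra+

lemma Mv: "(Filt ** Rinvpow k ** e ** mpow Rot k) *v v = (Filt ** Rinvpow k) *v (e *v (mpow Rot k *v v))"
  by (simp add: matrix_vector_mul_assoc matrix_mul_assoc)

definition cc :: "qubit2 \<Rightarrow> nat \<Rightarrow> op1 \<Rightarrow> complex" where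
  "cc v k e = braket v (kron (mat 1) (Filt ** Rinvpow k ** e ** mpow Rot k) *v PsiAB)"

lemma cX0: "cc PsiP 0 (mat2 p q u w) = (q + u) / 4"
  unfolding cc_def ccX
  apply (subst Mv)+
  apply (unfold FR Rphi0 Rphi1)
  apply (simp del: matrix_vector_mul_assoc)
  using prods sS_sq by algebra

lemma cX1: "cc PsiP 1 (mat2 p q u w) = (p - w) / 4"
  unfolding cc_def ccX
  apply (subst Mv)+
  apply (unfold FR Rphi0 Rphi1)
  apply (simp del: matrix_vector_mul_assoc)
  using prods sS_sq by algebra

lemma cX2: "cc PsiP 2 (mat2 p q u w) = - (q + u) / 4"
  unfolding cc_def ccX
  apply (subst Mv)+
  apply (unfold FR Rphi0 Rphi1)
  apply (simp del: matrix_vector_mul_assoc)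
  using prods sS_sq by algebra

lemma cX3: "cc PsiP 3 (mat2 p q u w) = - (p - w) / 4"
  unfolding cc_def ccX
  apply (subst Mv)+
  apply (unfold FR Rphi0 Rphi1)
  apply (simp del: matrix_vector_mul_assoc)
  using prods sS_sq by algebra

lemma cY0: "cc PsiM 0 (mat2 p q u w) = (w - p) / 4 + sS / 2 * (u - q)"
  unfolding cc_def ccY
  apply (subst Mv)+
  apply (unfold FR Rphi0 Rphi1)
  apply (simp del: matrix_vector_mul_assoc)
  using prods sS_sq by algebra

lemma cY1: "cc PsiM 1 (mat2 p q u w) = (- (2 * sS - 1) * q + (2 * sS + 1) * u) / 4"
  unfolding cc_def ccY
  apply (subst Mv)+
  apply (unfold FR Rphi0 Rphi1)
  apply (simp del: matrix_vector_mul_assoc)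
  using prods sS_sq by algebra

lemma cY2: "cc PsiM 2 (mat2 p q u w) = (p - w) / 4 + sS / 2 * (u - q)"
  unfolding cc_def ccY
  apply (subst Mv)+
  apply (unfold FR Rphi0 Rphi1)
  apply (simp del: matrix_vector_mul_assoc)
  using prods sS_sq by algebra

lemma cY3: "cc PsiM 3 (mat2 p q u w) = (- (2 * sS + 1) * q + (2 * sS - 1) * u) / 4"
  unfolding cc_def ccY
  apply (subst Mv)+
  apply (unfold FR Rphi0 Rphi1)
  apply (simp del: matrix_vector_mul_assoc)
  using prods sS_sq by algebra

lemma cZ0: "cc PhiM 0 (mat2 p q u w) = sS / 2 * (p - w) + (q - u) / 4"
  unfolding cc_def ccZ
  apply (subst Mv)+
  apply (unfold FR Rphi0 Rphi1)
  apply (simp del: matrix_vector_mul_assoc)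
  using prods sS_sq by algebra

lemma cZ1: "cc PhiM 1 (mat2 p q u w) = (- (2 * sS - 1) * q - (2 * sS + 1) * u) / 4"
  unfolding cc_def ccZ
  apply (subst Mv)+
  apply (unfold FR Rphi0 Rphi1)
  apply (simp del: matrix_vector_mul_assoc)
  using prods sS_sq by algebra

lemma cZ2: "cc PhiM 2 (mat2 p q u w) = - sS / 2 * (p - w) + (q - u) / 4"
  unfolding cc_def ccZ
  apply (subst Mv)+
  apply (unfold FR Rphi0 Rphi1)
  apply (simp del: matrix_vector_mul_assoc)
  using prods sS_sq by algebra

lemma cZ3: "cc PhiM 3 (mat2 p q u w) = ((2 * sS + 1) * q + (2 * sS - 1) * u) / 4"
  unfolding cc_def ccZ
  apply (subst Mv)+
  apply (unfold FR Rphi0 Rphi1)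
  apply (simp del: matrix_vector_mul_assoc)
  using prods sS_sq by algebra

definition PP :: "qubit2 \<Rightarrow> op1 \<Rightarrow> complex" where
  "PP v e = (\<Sum>k\<in>{0..3::nat}. cc v k e * cnj (cc v k e))"

lemma set03: "{0..3::nat} = {0,1,2,3}" by auto
lemma sum03: "(\<Sum>k\<in>{0..3::nat}. f k) = f 0 + f 1 + f 2 + f 3" by (simp add: set03 add.assoc)

lemma PP_Z: "PP PhiM e = 3/2 * PP PsiP e + 1/2 * PP PsiM e"
proof -
  obtain p q u w where e: "e = mat2 p q u w" using mat2_eta by blast
  have "PP PhiM e - (3/2 * PP PsiP e + 1/2 * PP PsiM e) = (sS * sS - 1/2) *
     (((p - w) * cnj (p - w) + (q + u) * cnj (q + u)) / 2 - (u - q) * cnj (u - q) / 2)"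
    unfolding PP_def e sum03
    apply (simp only: cX0 cX1 cX2 cX3 cY0 cY1 cY2 cY3 cZ0 cZ1 cZ2 cZ3)
    apply simp
    by (simp add: field_simps)
  then show ?thesis by (simp add: sS_sq)
qed

lemma PP_YX: "PP PsiM e = PP PsiP e + (e$1$2 - e$2$1) * cnj (e$1$2 - e$2$1) / 2"
proof -
  obtain p q u w where e: "e = mat2 p q u w" using mat2_eta by blast
  have "PP PsiM e - (PP PsiP e + (q - u) * cnj (q - u) / 2) = (sS * sS - 1/2) * ((u - q) * cnj (u - q))"
    unfolding PP_def e sum03
    apply (simp only: cX0 cX1 cX2 cX3 cY0 cY1 cY2 cY3 cZ0 cZ1 cZ2 cZ3)
    apply simp
    by (simp add: field_simps)
  then show ?thesis using e by (simp add: sS_sq)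
qed

lemma PP_real: "PP v e = of_real (\<Sum>k\<in>{0..3::nat}. (cmod (cc v k e))^2)"
  unfolding PP_def of_real_sum complex_norm_square ..

lemma mv_sum: "(sum A S) *v (v::complex^'n) = (\<Sum>x\<in>S. A x *v v)"
  by (simp add: vec_eq_iff matrix_vector_mult_def sum_distrib_right sum_component) (intro allI sum.swap)

lemma braket_sum: "braket v (sum w S) = (\<Sum>x\<in>S. braket v (w x))"
  unfolding braket_def by (simp add: sum_distrib_left sum_component) (intro allI sum.swap)

lemma outer_eq: "M ** ketbra u u ** adjoint_mat M = ketbra (M *v u) (M *v (u::complex^'n))"
  by (simp add: vec_eq_iff matrix_matrix_mult_def ketbra_def adjoint_mat_def matrix_vector_mult_def
      sum_distrib_left sum_distrib_right mult_ac)

lemma ketbra_quad: "braket v (ketbra w w *v v) = braket v w * cnj (braket v w)"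
proof -
  have "ketbra w w *v v = (\<chi> i. w$i * cnj (braket v w))"
    by (simp add: vec_eq_iff ketbra_def matrix_vector_mult_def braket_def sum_distrib_left mult_ac)
  then have "braket v (ketbra w w *v v) = (\<Sum>i\<in>UNIV. cnj (v$i) * w$i) * cnj (braket v w)"
    unfolding braket_def[of v "ketbra w w *v v"] by (simp add: sum_distrib_left mult_ac)
  then show ?thesis by (simp add: braket_def[of v w])
qed

lemma rho_quad:
  "braket v (rho Fam E *v v) = (\<Sum>f\<in>Fam. PP v (E f))"
proof -
  have "braket v (rho Fam E *v v) = (\<Sum>k\<in>{0..3::nat}. \<Sum>f\<in>Fam. cc v k (E f) * cnj (cc v k (E f)))"
    unfolding rho_def Let_def mv_sum braket_sum outer_eq ketbra_quad cc_def ..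
  also have "\<dots> = (\<Sum>f\<in>Fam. PP v (E f))"
    unfolding PP_def by (rule sum.swap)
  finally show ?thesis .
qed

theorem theorem1:
  fixes Fam :: "'f set" and E :: "'f \<Rightarrow> complex^2^2"
  assumes "finite Fam"
    and "Re (trace (rho Fam E)) > 0"
  shows "let pX = prob (rho Fam E) PsiP; pZ = prob (rho Fam E) PhiM;
             pY = prob (rho Fam E) PsiM; eb = pX + pY; a = pY
         in pX = eb - a \<and> pZ = 3 / 2 * eb - a \<and> pY = a \<and> eb / 2 \<le> a \<and> a \<le> eb"
proof -
  define T where "T = Re (trace (rho Fam E))"
  define N where "N v = Re (braket v (rho Fam E *v v))" for v
  have T: "T > 0" using assms(2) T_def by simp
  have Nsum: "N v = (\<Sum>f\<in>Fam. Re (PP v (E f)))" for v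
    unfolding N_def rho_quad by simp
  have NZ: "N PhiM = 3/2 * N PsiP + 1/2 * N PsiM"
    unfolding Nsum PP_Z by (simp add: sum.distrib sum_distrib_left)
  have NY: "N PsiP \<le> N PsiM"
    unfolding Nsum
  proof (rule sum_mono)
    fix f assume "f \<in> Fam"
    let ?z = "E f $ 1 $ 2 - E f $ 2 $ 1"
    have "Re (?z * cnj ?z / 2) \<ge> 0"
      using complex_norm_square[of ?z, symmetric] by simp
    then show "Re (PP PsiP (E f)) \<le> Re (PP PsiM (E f))"
      by (subst PP_YX) simp
  qed
  have NX: "N PsiP \<ge> 0"
    unfolding Nsum PP_real by (simp add: sum_nonneg)
  have p: "prob (rho Fam E) v = N v / T" for v
    unfolding prob_def N_def T_def ..
  show ?thesis
    unfolding Let_def p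
    using T NZ NY NX
    by (auto simp: field_simps)
qed

end
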